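(* Let $G$ be a finite even semi-cactus. Then $G\square K_2$ is Hamiltonian.
   Context: A semi-cactus is a connected graph $G$ such that (1) its maximum degree is at most 4; (2) every block of $G$ is either a cycle or a $K_2$; and (3) every vertex lies in one or two blocks of $G$. It is even if every cycle of $G$ is even. $\square$ denotes the Cartesian product; Hamiltonian means having a Hamiltonian cycle. *)

theory Defs
  imports Main
begin

definition sgraph :: "'a set \<Rightarrow> ('a \<Rightarrow> 'a \<Rightarrow> bool) \<Rightarrow> bool" where
  "sgraph V E \<longleftrightarrow> (\<forall>x y. E x y \<longrightarrow> x \<in> V \<and> y \<in> V \<and> x \<noteq> y \<and> E y x)"

definition degree :: "('a \<Rightarrow> 'a \<Rightarrow> bool) \<Rightarrow> 'a \<Rightarrow> nat" where
  "degree E v = card {u. E v u}"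

definition connected_on :: "('a \<Rightarrow> 'a \<Rightarrow> bool) \<Rightarrow> 'a set \<Rightarrow> bool" where
  "connected_on E S \<longleftrightarrow>
     (\<forall>x\<in>S. \<forall>y\<in>S. (\<lambda>a b. E a b \<and> a \<in> S \<and> b \<in> S)\<^sup>*\<^sup>* x y)"

definition connected_graph :: "'a set \<Rightarrow> ('a \<Rightarrow> 'a \<Rightarrow> bool) \<Rightarrow> bool" where
  "connected_graph V E \<longleftrightarrow> V \<noteq> {} \<and> connected_on E V"

definition nonsep_on :: "('a \<Rightarrow> 'a \<Rightarrow> bool) \<Rightarrow> 'a set \<Rightarrow> bool" where
  "nonsep_on E S \<longleftrightarrow> S \<noteq> {} \<and> connected_on E S \<and> (\<forall>v\<in>S. connected_on E (S - {v}))"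

text \<open>A block: a maximal connected subgraph without cut vertex (blocks of a
  simple graph are induced, so we identify them with their vertex sets).\<close>
definition is_block :: "'a set \<Rightarrow> ('a \<Rightarrow> 'a \<Rightarrow> bool) \<Rightarrow> 'a set \<Rightarrow> bool" where
  "is_block V E B \<longleftrightarrow> B \<subseteq> V \<and> nonsep_on E B \<and>
     (\<forall>B'. B \<subseteq> B' \<and> B' \<subseteq> V \<and> nonsep_on E B' \<longrightarrow> B' = B)"

definition block_is_cycle :: "('a \<Rightarrow> 'a \<Rightarrow> bool) \<Rightarrow> 'a set \<Rightarrow> bool" where
  "block_is_cycle E B \<longleftrightarrow> finite B \<and> card B \<ge> 3 \<and> connected_on E B \<and>
     (\<forall>v\<in>B. card {u\<in>B. E v u} = 2)"

definition block_is_K2 :: "('a \<Rightarrow> 'a \<Rightarrow> bool) \<Rightarrow> 'a set \<Rightarrow> bool" where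
  "block_is_K2 E B \<longleftrightarrow> (\<exists>x y. B = {x, y} \<and> x \<noteq> y \<and> E x y)"

definition is_cycle :: "'a set \<Rightarrow> ('a \<Rightarrow> 'a \<Rightarrow> bool) \<Rightarrow> 'a list \<Rightarrow> bool" where
  "is_cycle V E cs \<longleftrightarrow> length cs \<ge> 3 \<and> distinct cs \<and> set cs \<subseteq> V \<and>
     (\<forall>i < length cs. E (cs ! i) (cs ! ((i + 1) mod length cs)))"

definition hamiltonian :: "'a set \<Rightarrow> ('a \<Rightarrow> 'a \<Rightarrow> bool) \<Rightarrow> bool" where
  "hamiltonian V E \<longleftrightarrow> (\<exists>cs. is_cycle V E cs \<and> set cs = V)"

definition semi_cactus :: "'a set \<Rightarrow> ('a \<Rightarrow> 'a \<Rightarrow> bool) \<Rightarrow> bool" where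
  "semi_cactus V E \<longleftrightarrow> sgraph V E \<and> connected_graph V E \<and>
     (\<forall>v\<in>V. degree E v \<le> 4) \<and>
     (\<forall>B. is_block V E B \<longrightarrow> block_is_cycle E B \<or> block_is_K2 E B) \<and>
     (\<forall>v\<in>V. card {B. is_block V E B \<and> v \<in> B} \<in> {1, 2})"

definition even_graph :: "'a set \<Rightarrow> ('a \<Rightarrow> 'a \<Rightarrow> bool) \<Rightarrow> bool" where
  "even_graph V E \<longleftrightarrow> (\<forall>cs. is_cycle V E cs \<longrightarrow> even (length cs))"

definition box_V :: "'a set \<Rightarrow> 'b set \<Rightarrow> ('a \<times> 'b) set" where
  "box_V V1 V2 = V1 \<times> V2"

definition box_E :: "('a \<Rightarrow> 'a \<Rightarrow> bool) \<Rightarrow> ('b \<Rightarrow> 'b \<Rightarrow> bool) \<Rightarrow> 'a set \<Rightarrow> 'b set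
     \<Rightarrow> ('a \<times> 'b) \<Rightarrow> ('a \<times> 'b) \<Rightarrow> bool" where
  "box_E E1 E2 V1 V2 p q \<longleftrightarrow> p \<in> V1 \<times> V2 \<and> q \<in> V1 \<times> V2 \<and>
     ((E1 (fst p) (fst q) \<and> snd p = snd q) \<or> (fst p = fst q \<and> E2 (snd p) (snd q)))"

definition K2_V :: "nat set" where "K2_V = {0, 1}"
definition K2_E :: "nat \<Rightarrow> nat \<Rightarrow> bool" where
  "K2_E x y \<longleftrightarrow> x \<in> K2_V \<and> y \<in> K2_V \<and> x \<noteq> y"

end

theory Submission
  imports Defs
begin

lemma rt_mono_set:
  assumes "(\<lambda>a b. E a b \<and> a \<in> S \<and> b \<in> S)\<^sup>*\<^sup>* x y" "S \<subseteq> T"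
  shows "(\<lambda>a b. E a b \<and> a \<in> T \<and> b \<in> T)\<^sup>*\<^sup>* x y"
  using assms(1)
proof (induction rule: rtranclp_induct)
  case base then show ?case by simp
next
  case (step y z) then show ?case using assms(2)
    by (auto intro: rtranclp.rtrancl_into_rtrancl)
qed

lemma conn_union:
  assumes "connected_on E S" "connected_on E T" "S \<inter> T \<noteq> {}"
  shows "connected_on E (S \<union> T)"
  unfolding connected_on_def
proof (intro ballI)
  fix x y assume x: "x \<in> S \<union> T" and y: "y \<in> S \<union> T"
  obtain c where c: "c \<in> S" "c \<in> T" using assms(3) by blast
  let ?R = "\<lambda>a b. E a b \<and> a \<in> S \<union> T \<and> b \<in> S \<union> T"
  have h: "?R\<^sup>*\<^sup>* a b" if "a \<in> U" "b \<in> U" "connected_on E U" "U \<subseteq> S \<union> T" for a b U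
    using that rt_mono_set[of E U a b "S \<union> T"] unfolding connected_on_def by blast
  have "?R\<^sup>*\<^sup>* x c" using x c h[of x S c] h[of x T c] assms by blast
  moreover have "?R\<^sup>*\<^sup>* c y" using y c h[of c S y] h[of c T y] assms by blast
  ultimately show "?R\<^sup>*\<^sup>* x y" by (rule rtranclp_trans)
qed

lemma conn_single: "connected_on E {x}"
  unfolding connected_on_def by simp

lemma conn_empty: "connected_on E {}"
  unfolding connected_on_def by simp

lemma conn_edge:
  assumes "E x y" "E y x" shows "connected_on E {x, y}"
  unfolding connected_on_def
proof (intro ballI)
  fix a b assume "a \<in> {x,y}" "b \<in> {x,y}"
  then show "(\<lambda>a b. E a b \<and> a \<in> {x,y} \<and> b \<in> {x,y})\<^sup>*\<^sup>* a b"
    using assms by (auto intro: r_into_rtranclp)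
qed

lemma path_conn:
  assumes "successively E xs" "xs \<noteq> []" "\<forall>a b. E a b \<longrightarrow> E b a"
  shows "connected_on E (set xs)"
  using assms(1,2)
proof (induction xs)
  case Nil then show ?case by simp
next
  case (Cons x xs)
  show ?case
  proof (cases xs)
    case Nil then show ?thesis by (simp add: conn_single)
  next
    case (Cons y ys)
    have "connected_on E (set xs)" using Cons.IH Cons.prems \<open>xs = y # ys\<close> by simp
    moreover have "connected_on E {x, y}" using Cons.prems \<open>xs = y # ys\<close> assms(3) by (intro conn_edge) auto
    ultimately have "connected_on E ({x,y} \<union> set xs)"
      using \<open>xs = y # ys\<close> by - (rule conn_union, auto)
    moreover have "{x,y} \<union> set xs = set (x # xs)" using \<open>xs = y # ys\<close> by auto
    ultimately show ?thesis by simp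
  qed
qed

lemma crossing:
  assumes "connected_on E S" "T \<subseteq> S" "T \<noteq> {}" "S - T \<noteq> {}"
  shows "\<exists>a\<in>T. \<exists>b\<in>S - T. E a b"
proof -
  obtain t s where t: "t \<in> T" and s: "s \<in> S - T" using assms by blast
  have "(\<lambda>a b. E a b \<and> a \<in> S \<and> b \<in> S)\<^sup>*\<^sup>* t s" using assms(1,2) t s
    unfolding connected_on_def by blast
  then have "s \<notin> T \<longrightarrow> (\<exists>a\<in>T. \<exists>b\<in>S - T. E a b)"
  proof (induction rule: rtranclp_induct)
    case base then show ?case using t by simp
  next
    case (step y z)
    then show ?case by blast
  qed
  then show ?thesis using s by blast
qed

lemma propagate:
  assumes "connected_on E S" "x \<in> S" "x \<in> R"
    "\<And>a b. a \<in> R \<Longrightarrow> E a b \<Longrightarrow> b \<in> S \<Longrightarrow> b \<in> R"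
  shows "S \<subseteq> R"
proof (rule ccontr)
  assume "\<not> S \<subseteq> R"
  then have "S - (S \<inter> R) \<noteq> {}" by blast
  then obtain a b where "a \<in> S \<inter> R" "b \<in> S - (S \<inter> R)" "E a b"
    using crossing[OF assms(1), of "S \<inter> R"] assms(2,3) by blast
  then show False using assms(4) by blast
qed


definition symE :: "('a \<Rightarrow> 'a \<Rightarrow> bool) \<Rightarrow> bool" where
  "symE E \<longleftrightarrow> (\<forall>a b. E a b \<longrightarrow> E b a)"

lemma nonsep_edge:
  assumes "E x y" "E y x" "x \<noteq> y"
  shows "nonsep_on E {x, y}"
proof -
  have eq: "{x,y} - {x} = {y}" "{x,y} - {y} = {x}" using assms(3) by auto
  have c: "connected_on E ({x,y} - {v})" if "v \<in> {x,y}" for v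
  proof -
    from that have "v = x \<or> v = y" by simp
    then show ?thesis by (elim disjE) (simp_all only: eq conn_single)
  qed
  show ?thesis unfolding nonsep_on_def
    using conn_edge[of E x y, OF assms(1,2)] c by blast
qed

lemma nonsep_union2:
  assumes "nonsep_on E A" "nonsep_on E B" "x \<in> A" "x \<in> B" "y \<in> A" "y \<in> B" "x \<noteq> y"
  shows "nonsep_on E (A \<union> B)"
  unfolding nonsep_on_def
proof (intro conjI ballI)
  show "A \<union> B \<noteq> {}" using assms by auto
  show "connected_on E (A \<union> B)" using assms by - (rule conn_union, auto simp: nonsep_on_def)
  fix w assume "w \<in> A \<union> B"
  have cA: "connected_on E (A - {w})"
    using assms(1) unfolding nonsep_on_def by (cases "w \<in> A") auto
  have cB: "connected_on E (B - {w})"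
    using assms(2) unfolding nonsep_on_def by (cases "w \<in> B") auto
  have "(A - {w}) \<inter> (B - {w}) \<noteq> {}" using assms by auto
  then have "connected_on E ((A - {w}) \<union> (B - {w}))" using cA cB by - (rule conn_union)
  moreover have "(A - {w}) \<union> (B - {w}) = A \<union> B - {w}" by auto
  ultimately show "connected_on E (A \<union> B - {w})" by simp
qed

lemma ear:
  assumes A: "nonsep_on E A" and ab: "a \<in> A" "b \<in> A" "a \<noteq> b"
    and sc: "successively E (a # mid @ [b])" and ds: "distinct (a # mid @ [b])"
    and dj: "set mid \<inter> A = {}" and sy: "symE E"
  shows "nonsep_on E (A \<union> set mid)"
proof -
  have sy': "\<forall>a b. E a b \<longrightarrow> E b a" using sy unfolding symE_def by blast
  have cA: "connected_on E A" and cA': "\<And>w. w \<in> A \<Longrightarrow> connected_on E (A - {w})"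
    using A unfolding nonsep_on_def by auto
  have cp: "connected_on E (set xs)" if "successively E xs" "xs \<noteq> []" for xs
    using path_conn[OF that sy'] .
  have cpath: "connected_on E (set (a # mid @ [b]))" by (rule cp[OF sc]) simp
  have "connected_on E (A \<union> set (a # mid @ [b]))"
    using cA cpath ab by - (rule conn_union, auto)
  moreover have "A \<union> set (a # mid @ [b]) = A \<union> set mid" using ab by auto
  ultimately have c0: "connected_on E (A \<union> set mid)" by simp
  have cw: "connected_on E (A \<union> set mid - {w})" if w: "w \<in> A \<union> set mid" for w
  proof (cases "w \<in> A")
    case True
    have cAw: "connected_on E (A - {w})" using cA' True .
    show ?thesis
    proof (cases "mid = []")
      case True then show ?thesis using cAw by simp
    next
      case False
      show ?thesis
      proof (cases "w = a")
        case True
        have "successively E (mid @ [b])" using sc by (simp add: successively_Cons)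
        then have c1: "connected_on E (set (mid @ [b]))" by (rule cp) simp
        have "b \<in> A - {w}" using ab True by auto
        then have "connected_on E ((A - {w}) \<union> set (mid @ [b]))"
          using cAw c1 by - (rule conn_union, auto)
        moreover have "(A - {w}) \<union> set (mid @ [b]) = A \<union> set mid - {w}"
          using \<open>b \<in> A - {w}\<close> dj True ab by auto
        ultimately show ?thesis by simp
      next
        case False
        have "successively E (a # mid)" using sc successively_append_iff[of E "a # mid" "[b]"]
          by simp
        then have c1: "connected_on E (set (a # mid))" by (rule cp) simp
        have "a \<in> A - {w}" using ab False by auto
        then have "connected_on E ((A - {w}) \<union> set (a # mid))"
          using cAw c1 by - (rule conn_union, auto)
        moreover have "(A - {w}) \<union> set (a # mid) = A \<union> set mid - {w}"
          using \<open>a \<in> A - {w}\<close> dj \<open>w \<in> A\<close> by auto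
        ultimately show ?thesis by simp
      qed
    qed
  next
    case False
    then have "w \<in> set mid" using w by auto
    then obtain xs ys where mid: "mid = xs @ w # ys" by (meson split_list)
    have s1: "successively E (a # xs)" using sc mid successively_append_iff[of E "a # xs" "w # ys @ [b]"] by simp
    have s2: "successively E (ys @ [b])" using sc mid
      by (simp add: successively_append_iff successively_Cons)
    have c1: "connected_on E (set (a # xs))" by (rule cp[OF s1]) simp
    have c2: "connected_on E (set (ys @ [b]))" by (rule cp[OF s2]) simp
    have wn: "w \<notin> set xs" "w \<notin> set ys" using ds unfolding mid by auto
    have "connected_on E (A \<union> set (a # xs))" using cA c1 ab by - (rule conn_union, auto)
    then have "connected_on E ((A \<union> set (a # xs)) \<union> set (ys @ [b]))"
      using c2 ab by - (rule conn_union, auto)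
    moreover have "(A \<union> set (a # xs)) \<union> set (ys @ [b]) = A \<union> set mid - {w}"
      using wn mid ab False by auto
    ultimately show ?thesis by simp
  qed
  show ?thesis unfolding nonsep_on_def using c0 cw ab by auto
qed

lemma block_exists:
  assumes "finite V" "T \<subseteq> V" "nonsep_on E T"
  shows "\<exists>B. is_block V E B \<and> T \<subseteq> B"
proof -
  let ?F = "{S. T \<subseteq> S \<and> S \<subseteq> V \<and> nonsep_on E S}"
  have "T \<in> ?F" using assms by auto
  have fin: "finite ?F" by (rule finite_subset[of _ "Pow V"]) (use assms(1) in auto)
  have ne: "card ` ?F \<noteq> {}" using \<open>T \<in> ?F\<close> by blast
  have "Max (card ` ?F) \<in> card ` ?F" using Max_in[OF finite_imageI[OF fin] ne] .
  then obtain S where S0: "S \<in> ?F" "Max (card ` ?F) = card S" by (rule imageE)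
  have S: "S \<in> ?F" "\<forall>S'\<in>?F. card S' \<le> card S"
  proof -
    show "S \<in> ?F" using S0 by simp
    show "\<forall>S'\<in>?F. card S' \<le> card S"
    proof
      fix S' assume "S' \<in> ?F"
      then have "card S' \<in> card ` ?F" by (rule imageI)
      from Max_ge[OF finite_imageI[OF fin] this] show "card S' \<le> card S" using S0(2) by simp
    qed
  qed
  have "is_block V E S" unfolding is_block_def
  proof (intro conjI allI impI)
    show "S \<subseteq> V" "nonsep_on E S" using S by auto
    fix B' assume B': "S \<subseteq> B' \<and> B' \<subseteq> V \<and> nonsep_on E B'"
    then have "B' \<in> ?F" using S by auto
    then have "card B' \<le> card S" using S by auto
    moreover have "finite B'" using B' assms(1) finite_subset by blast
    ultimately show "B' = S" using B' card_seteq by blast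
  qed
  then show ?thesis using S by auto
qed

lemma block_unique:
  assumes "is_block V E B" "is_block V E B'" "x \<in> B" "x \<in> B'" "y \<in> B" "y \<in> B'" "x \<noteq> y"
  shows "B = B'"
proof -
  have "nonsep_on E (B \<union> B')" using assms unfolding is_block_def
    by (intro nonsep_union2[of _ _ _ x y]) auto
  then have "B \<union> B' = B" "B \<union> B' = B'" using assms unfolding is_block_def
    by (metis Un_subset_iff sup_ge1 sup_ge2)+
  then show ?thesis by simp
qed


lemma sg_sym: "sgraph V E \<Longrightarrow> symE E"
  unfolding sgraph_def symE_def by blast

lemma rt_path:
  assumes "r\<^sup>*\<^sup>* a b"
  shows "\<exists>xs. xs \<noteq> [] \<and> hd xs = a \<and> last xs = b \<and> successively r xs"
  using assms
proof (induction rule: rtranclp_induct)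
  case base then show ?case by (intro exI[of _ "[a]"]) simp
next
  case (step y z)
  then obtain xs where xs: "xs \<noteq> []" "hd xs = a" "last xs = y" "successively r xs" by blast
  then show ?case
    by (intro exI[of _ "xs @ [z]"]) (auto simp: successively_append_iff step.hyps(2))
qed

lemma succ_all:
  assumes "successively r xs" "\<And>a b. r a b \<Longrightarrow> Q b" "xs \<noteq> [] \<Longrightarrow> Q (hd xs)"
  shows "\<forall>x\<in>set xs. Q x"
  using assms
proof (induction xs)
  case Nil then show ?case by simp
next
  case (Cons x xs)
  show ?case
  proof (cases xs)
    case Nil then show ?thesis using Cons.prems by simp
  next
    case (Cons y ys)
    then have "r x y" "successively r xs" using Cons.prems(1) by auto
    then have "\<forall>x\<in>set xs. Q x" using Cons.IH Cons.prems(2) \<open>xs = y # ys\<close> by auto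
    then show ?thesis using Cons.prems(3) by simp
  qed
qed

lemma succ_drop_loop:
  assumes "successively r (xs @ y # ys @ y # zs)"
  shows "successively r (xs @ y # zs)"
proof -
  have "successively r xs" "successively r (y # ys @ y # zs)"
    "xs \<noteq> [] \<longrightarrow> r (last xs) y"
    using assms by (auto simp: successively_append_iff)
  moreover have "successively r (y # zs)"
    using successively_append_iff[of r "y # ys" "y # zs"] \<open>successively r (y # ys @ y # zs)\<close> by simp
  ultimately show ?thesis by (auto simp: successively_append_iff)
qed

lemma cut_lemma:
  assumes sg: "sgraph V E" and blk: "is_block V E B" and vB: "v \<in> B" and uB: "u \<notin> B"
    and vu: "E v u" and bB: "b \<in> B - {v}"
    and rt: "(\<lambda>a c. E a c \<and> a \<in> V - {v} \<and> c \<in> V - {v})\<^sup>*\<^sup>* b u"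
  shows False
proof -
  define Rv where "Rv = (\<lambda>a c. E a c \<and> a \<in> V - {v} \<and> c \<in> V - {v})"
  define P where "P xs \<longleftrightarrow> xs \<noteq> [] \<and> hd xs \<in> B - {v} \<and> last xs = u \<and> successively Rv xs" for xs
  obtain p0 where "P p0" using rt_path[OF rt[folded Rv_def]] bB unfolding P_def by blast
  then obtain p where Pp: "P p" and pmin: "\<And>q. P q \<Longrightarrow> length p \<le> length q"
    using ex_has_least_nat[of P p0 length] by blast
  have pne: "p \<noteq> []" and hdp: "hd p \<in> B - {v}" and lastp: "last p = u" and sp: "successively Rv p"
    using Pp unfolding P_def by auto
  have BV: "B \<subseteq> V" using blk unfolding is_block_def by auto
  have inV: "\<forall>x\<in>set p. x \<in> V - {v}"
    by (rule succ_all[OF sp]) (use hdp BV in \<open>auto simp: Rv_def\<close>)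
  have dp: "distinct p"
  proof (rule ccontr)
    assume "\<not> distinct p"
    then obtain xs y ys zs where p: "p = xs @ [y] @ ys @ [y] @ zs" using not_distinct_decomp by blast
    define q where "q = xs @ y # zs"
    have "hd q = hd p" unfolding q_def p by (cases xs) auto
    moreover have "last q = last p" unfolding q_def p by (cases "zs = []") auto
    moreover have "successively Rv q" using sp succ_drop_loop unfolding q_def p by simp
    ultimately have "P q" using Pp unfolding P_def q_def by auto
    moreover have "length q < length p" unfolding q_def p by simp
    ultimately show False using pmin by fastforce
  qed
  have tlB: "set (tl p) \<inter> B = {}"
  proof (rule ccontr)
    assume "set (tl p) \<inter> B \<noteq> {}"
    then obtain z where z: "z \<in> set (tl p)" "z \<in> B" by blast
    then obtain xs ys where tp: "tl p = xs @ z # ys" by (meson split_list)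
    have p: "p = hd p # xs @ z # ys" using tp pne by (metis list.collapse)
    define q where "q = z # ys"
    have "z \<in> V - {v}" using inV z(1) pne by (meson list.set_sel(2))
    then have "hd q \<in> B - {v}" using z unfolding q_def by simp
    moreover have "last q = last p" unfolding q_def by (subst p) simp
    moreover have "successively Rv q"
      using sp successively_append_iff[of Rv "hd p # xs" "z # ys"] unfolding q_def by (subst (asm) p) simp
    ultimately have "P q" using Pp unfolding P_def q_def by auto
    moreover have "length q < length p" unfolding q_def using arg_cong[OF p, of length] by simp
    ultimately show False using pmin by fastforce
  qed
  have tne: "tl p \<noteq> []"
  proof
    assume "tl p = []"
    then have "p = [hd p]" using pne by (metis list.collapse)
    then have "hd p = last p" by (metis last.simps)
    then show False using hdp lastp uB by simp
  qed
  have sy: "symE E" using sg_sym[OF sg] .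
  have pv: "hd p # tl p @ [v] = p @ [v]" using pne by simp
  have sc: "successively E (hd p # tl p @ [v])"
  proof -
    have "successively E p" using sp by (rule successively_mono) (simp add: Rv_def)
    moreover have "E (last p) v" using vu lastp sy unfolding symE_def by blast
    ultimately show ?thesis unfolding pv using pne by (simp add: successively_append_iff)
  qed
  have ds: "distinct (hd p # tl p @ [v])" unfolding pv using dp inV by auto
  have ns: "nonsep_on E (B \<union> set (tl p))"
    by (rule ear[OF _ _ vB _ sc ds tlB sy]) (use blk hdp in \<open>auto simp: is_block_def\<close>)
  have "B \<union> set (tl p) \<subseteq> V" using BV inV pne by (auto dest: list.set_sel(2))
  then have "B \<union> set (tl p) = B" using blk ns unfolding is_block_def by blast
  moreover have "u \<in> set (tl p)" using lastp tne pne by (metis last_in_set last_tl)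
  ultimately show False using uB by blast
qed


definition restr :: "('a \<Rightarrow> 'a \<Rightarrow> bool) \<Rightarrow> 'a set \<Rightarrow> 'a \<Rightarrow> 'a \<Rightarrow> bool" where
  "restr E S a b \<longleftrightarrow> E a b \<and> a \<in> S \<and> b \<in> S"

lemma conn_restr: "S \<subseteq> T \<Longrightarrow> connected_on (restr E T) S = connected_on E S"
proof -
  assume "S \<subseteq> T"
  then have "(\<lambda>a b. restr E T a b \<and> a \<in> S \<and> b \<in> S) = (\<lambda>a b. E a b \<and> a \<in> S \<and> b \<in> S)"
    by (auto simp: fun_eq_iff restr_def)
  then show ?thesis unfolding connected_on_def by simp
qed

lemma nonsep_restr: "S \<subseteq> T \<Longrightarrow> nonsep_on (restr E T) S = nonsep_on E S"
  unfolding nonsep_on_def using conn_restr[of S T E] conn_restr[of "S - {_}" T E]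
  by (metis Diff_subset subset_trans)

lemma sym_rt:
  assumes "\<And>a b. r a b \<Longrightarrow> r b a" "r\<^sup>*\<^sup>* a b"
  shows "r\<^sup>*\<^sup>* b a"
  using assms(2)
proof (induction rule: rtranclp_induct)
  case base then show ?case by simp
next
  case (step y z) then show ?case using assms(1) by (meson converse_rtranclp_into_rtranclp)
qed

context
  fixes V V1 V2 :: "'a set" and E :: "'a \<Rightarrow> 'a \<Rightarrow> bool" and v :: 'a
  assumes fin: "finite V" and sc: "semi_cactus V E"
    and un: "V = V1 \<union> V2" and it: "V1 \<inter> V2 = {v}"
    and noe: "\<And>a b. a \<in> V1 - {v} \<Longrightarrow> b \<in> V2 - {v} \<Longrightarrow> \<not> E a b \<and> \<not> E b a"
    and ne1: "V1 - {v} \<noteq> {}"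
begin

lemma sgV: "sgraph V E" using sc unfolding semi_cactus_def by blast

lemma vV1: "v \<in> V1" using it by blast

lemma V1V: "V1 \<subseteq> V" using un by blast

lemma stay:
  assumes "connected_on E S" "S \<subseteq> V - {v}" "S \<inter> (V1 - {v}) \<noteq> {}"
  shows "S \<subseteq> V1 - {v}"
proof -
  obtain x where "x \<in> S" "x \<in> V1 - {v}" using assms(3) by blast
  have "S \<subseteq> V1 - {v}"
  proof (rule propagate[OF assms(1) \<open>x \<in> S\<close> \<open>x \<in> V1 - {v}\<close>])
    fix a b assume "a \<in> V1 - {v}" "E a b" "b \<in> S"
    then show "b \<in> V1 - {v}" using noe[of a b] assms(2) un by blast
  qed
  then show ?thesis .
qed

lemma block_side:
  assumes "nonsep_on E B" "B \<subseteq> V" "B \<inter> (V1 - {v}) \<noteq> {}"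
  shows "B \<subseteq> V1"
proof -
  have "connected_on E (B - {v})"
    using assms(1) unfolding nonsep_on_def by (cases "v \<in> B") auto
  then have "B - {v} \<subseteq> V1 - {v}" using assms by (intro stay) auto
  then show ?thesis using vV1 by blast
qed

lemma conn_side: "connected_on E V1"
proof -
  have cV: "connected_on E V" using sc unfolding semi_cactus_def connected_graph_def by blast
  let ?r = "\<lambda>a b. E a b \<and> a \<in> V1 \<and> b \<in> V1"
  have vy: "?r\<^sup>*\<^sup>* v y" if "y \<in> V1" for y
  proof -
    have "(\<lambda>a b. E a b \<and> a \<in> V \<and> b \<in> V)\<^sup>*\<^sup>* v y" using cV that vV1 V1V unfolding connected_on_def by blast
    then have "y \<in> V1 \<longrightarrow> ?r\<^sup>*\<^sup>* v y"
    proof (induction rule: rtranclp_induct)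
      case base then show ?case by simp
    next
      case (step y z)
      show ?case
      proof
        assume z: "z \<in> V1"
        show "?r\<^sup>*\<^sup>* v z"
        proof (cases "y \<in> V1")
          case True then show ?thesis using step z by (auto intro: rtranclp.rtrancl_into_rtrancl)
        next
          case False
          then have "y \<in> V2 - {v}" using step un vV1 by blast
          then have "z = v" using noe[of z y] z step by blast
          then show ?thesis by simp
        qed
      qed
    qed
    then show ?thesis using that by blast
  qed
  have sy: "\<And>a b. ?r a b \<Longrightarrow> ?r b a" using sgV unfolding sgraph_def by blast
  show ?thesis unfolding connected_on_def
  proof (intro ballI)
    fix x y assume "x \<in> V1" "y \<in> V1"
    then show "?r\<^sup>*\<^sup>* x y" using vy sym_rt[OF sy vy[of x]] by (meson rtranclp_trans)
  qed
qed

lemma nbr_side: "\<exists>u\<in>V1 - {v}. E v u"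
  using crossing[OF conn_side, of "{v}"] vV1 ne1 by blast

lemma blocks_side: "is_block V1 (restr E V1) B \<longleftrightarrow> is_block V E B \<and> B \<subseteq> V1"
proof
  assume b1: "is_block V1 (restr E V1) B"
  have BV1: "B \<subseteq> V1" using b1 unfolding is_block_def by blast
  have nsB: "nonsep_on E B" using b1 nonsep_restr[OF BV1, of E] unfolding is_block_def by blast
  have mx: "B' = B" if "B \<subseteq> B'" "B' \<subseteq> V1" "nonsep_on E B'" for B'
  proof -
    have "nonsep_on (restr E V1) B'" using that nonsep_restr[OF that(2), of E] by simp
    then show ?thesis using b1 that unfolding is_block_def by blast
  qed
  show "is_block V E B \<and> B \<subseteq> V1"
  proof (cases "B \<inter> (V1 - {v}) = {}")
    case True
    then have "B = {v}" using BV1 nsB unfolding nonsep_on_def by blast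
    obtain u where u: "u \<in> V1 - {v}" "E v u" using nbr_side by blast
    have "nonsep_on E {v, u}" using u sgV unfolding sgraph_def by (intro nonsep_edge) auto
    then have "{v, u} = B" using mx[of "{v,u}"] \<open>B = {v}\<close> u vV1 by blast
    then show ?thesis using u \<open>B = {v}\<close> by auto
  next
    case False
    have "is_block V E B" unfolding is_block_def
    proof (intro conjI allI impI)
      show "B \<subseteq> V" "nonsep_on E B" using BV1 V1V nsB by auto
      fix B' assume B': "B \<subseteq> B' \<and> B' \<subseteq> V \<and> nonsep_on E B'"
      then have "B' \<subseteq> V1" using False by (intro block_side) auto
      then show "B' = B" using mx B' by blast
    qed
    then show ?thesis using BV1 by blast
  qed
next
  assume "is_block V E B \<and> B \<subseteq> V1"
  then show "is_block V1 (restr E V1) B"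
    unfolding is_block_def using nonsep_restr V1V by (metis subset_trans)
qed

lemma blocks_of_vertex_side:
  assumes "w \<in> V1 - {v}"
  shows "{B. is_block V1 (restr E V1) B \<and> w \<in> B} = {B. is_block V E B \<and> w \<in> B}"
proof -
  have "B \<subseteq> V1" if "is_block V E B" "w \<in> B" for B
    using that assms unfolding is_block_def by (intro block_side) auto
  then show ?thesis using blocks_side by blast
qed

lemma finite_blocks: "finite {B. is_block V E B \<and> P B}"
  by (rule finite_subset[of _ "Pow V"]) (use fin in \<open>auto simp: is_block_def\<close>)

lemma semi_side: "semi_cactus V1 (restr E V1)"
  unfolding semi_cactus_def
proof (intro conjI ballI allI impI)
  show "sgraph V1 (restr E V1)" using sgV unfolding sgraph_def restr_def by blast
  show "connected_graph V1 (restr E V1)" unfolding connected_graph_def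
    using conn_side conn_restr[of V1 V1 E] vV1 by auto
  fix w assume w: "w \<in> V1"
  have "{u. restr E V1 w u} \<subseteq> {u. E w u}" by (auto simp: restr_def)
  moreover have "finite {u. E w u}" using sgV fin unfolding sgraph_def
    by (metis (no_types, lifting) mem_Collect_eq rev_finite_subset subsetI)
  ultimately have "degree (restr E V1) w \<le> degree E w" unfolding degree_def by (rule card_mono[rotated])
  then show "degree (restr E V1) w \<le> 4" using sc w V1V unfolding semi_cactus_def by force
next
  fix B assume "is_block V1 (restr E V1) B"
  then have b: "is_block V E B" "B \<subseteq> V1" using blocks_side by auto
  then have "block_is_cycle E B \<or> block_is_K2 E B" using sc unfolding semi_cactus_def by blast
  moreover have "block_is_cycle (restr E V1) B = block_is_cycle E B"
  proof -
    have "\<forall>x\<in>B. {u \<in> B. restr E V1 x u} = {u \<in> B. E x u}" using b by (auto simp: restr_def)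
    then show ?thesis unfolding block_is_cycle_def using conn_restr[OF b(2)] by simp
  qed
  moreover have "block_is_K2 (restr E V1) B = block_is_K2 E B"
    unfolding block_is_K2_def restr_def using b(2) by auto
  ultimately show "block_is_cycle (restr E V1) B \<or> block_is_K2 (restr E V1) B" by simp
next
  fix w assume w: "w \<in> V1"
  let ?S1 = "{B. is_block V1 (restr E V1) B \<and> w \<in> B}"
  let ?S = "{B. is_block V E B \<and> w \<in> B}"
  have sub: "?S1 \<subseteq> ?S" using blocks_side by blast
  have fS: "finite ?S" by (rule finite_blocks)
  have "card ?S \<in> {1,2}" using sc w V1V unfolding semi_cactus_def by blast
  then have le: "card ?S1 \<le> 2" using card_mono[OF fS sub] by auto
  have "?S1 \<noteq> {}"
  proof (cases "w = v")
    case False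
    have "?S \<noteq> {}"
    proof
      assume h: "?S = {}"
      have "card ?S = 0" by (simp only: h card.empty)
      then show False using \<open>card ?S \<in> {1,2}\<close> by simp
    qed
    then show ?thesis using blocks_of_vertex_side[of w] w False by auto
  next
    case True
    obtain u where u: "u \<in> V1 - {v}" "E v u" using nbr_side by blast
    have "nonsep_on E {v, u}" using u sgV unfolding sgraph_def by (intro nonsep_edge) auto
    moreover have "{v,u} \<subseteq> V" using u vV1 V1V by blast
    ultimately obtain B where B: "is_block V E B" "{v,u} \<subseteq> B"
      using block_exists[OF fin] by blast
    then have "B \<subseteq> V1" using u unfolding is_block_def by (intro block_side) auto
    then show ?thesis using B True blocks_side by blast
  qed
  moreover have "finite ?S1" using fS sub finite_subset by blast
  ultimately have "card ?S1 \<ge> 1" by (simp add: Suc_le_eq card_gt_0_iff)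
  then show "card ?S1 \<in> {1,2}" using le by auto
qed

lemma even_side: "even_graph V E \<Longrightarrow> even_graph V1 (restr E V1)"
  unfolding even_graph_def is_cycle_def restr_def using V1V by blast

end


definition cyc :: "('a \<Rightarrow> 'a \<Rightarrow> bool) \<Rightarrow> 'a list \<Rightarrow> bool" where
  "cyc R cs \<longleftrightarrow> length cs \<ge> 3 \<and> distinct cs \<and> successively R cs \<and> R (last cs) (hd cs)"

lemma is_cycle_iff: "is_cycle V E cs \<longleftrightarrow> cyc E cs \<and> set cs \<subseteq> V"
proof
  assume h: "is_cycle V E cs"
  then have l: "length cs \<ge> 3" and a: "\<forall>i<length cs. E (cs ! i) (cs ! ((i + 1) mod length cs))"
    unfolding is_cycle_def by auto
  have "successively E cs" unfolding successively_conv_nth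
  proof (intro allI impI)
    fix i assume "Suc i < length cs"
    then show "E (cs ! i) (cs ! Suc i)" using a[rule_format, of i] by simp
  qed
  moreover have "E (last cs) (hd cs)"
  proof -
    obtain n where n: "length cs = Suc n" using l by (cases "length cs") auto
    have "E (cs ! n) (cs ! 0)" using a[rule_format, of n] n by simp
    moreover have ne: "cs \<noteq> []" using n by auto
    ultimately show ?thesis using n by (simp add: last_conv_nth[OF ne] hd_conv_nth[OF ne])
  qed
  ultimately show "cyc E cs \<and> set cs \<subseteq> V" using h unfolding is_cycle_def cyc_def by auto
next
  assume h: "cyc E cs \<and> set cs \<subseteq> V"
  then have l: "length cs \<ge> 3" and s: "successively E cs" and w: "E (last cs) (hd cs)"
    unfolding cyc_def by auto
  have "E (cs ! i) (cs ! ((i + 1) mod length cs))" if "i < length cs" for i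
  proof (cases "Suc i < length cs")
    case True then show ?thesis using successively_nth[OF s True] by simp
  next
    case False
    obtain n where n: "length cs = Suc n" using l by (cases "length cs") auto
    then have "i = n" using that False by simp
    moreover have ne: "cs \<noteq> []" using n by auto
    ultimately show ?thesis using w n by (simp add: last_conv_nth[OF ne] hd_conv_nth[OF ne])
  qed
  then show "is_cycle V E cs" using h unfolding is_cycle_def cyc_def by auto
qed

fun pedges :: "'a list \<Rightarrow> 'a set set" where
  "pedges (x # y # zs) = insert {x, y} (pedges (y # zs))"
| "pedges _ = {}"

definition cedges :: "'a list \<Rightarrow> 'a set set" where
  "cedges cs = (if cs = [] then {} else insert {last cs, hd cs} (pedges cs))"

lemma pedges_Cons: "pedges (x # xs) = (if xs = [] then {} else insert {x, hd xs} (pedges xs))"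
  by (cases xs) auto

lemma pedges_append:
  "pedges (xs @ ys) = pedges xs \<union> pedges ys \<union> (if xs = [] \<or> ys = [] then {} else {{last xs, hd ys}})"
proof (induction xs)
  case Nil then show ?case by simp
next
  case (Cons x xs)
  then show ?case by (cases xs; cases ys) (auto simp: pedges_Cons)
qed

lemma pedges_rev: "pedges (rev xs) = pedges xs"
proof (induction xs)
  case Nil then show ?case by simp
next
  case (Cons x xs)
  show ?case
  proof (cases xs)
    case Nil then show ?thesis by simp
  next
    case (Cons y ys)
    have "pedges (rev (x#xs)) = pedges (rev xs @ [x])" by simp
    also have "\<dots> = pedges (rev xs) \<union> {{last (rev xs), x}}"
      using pedges_append[of "rev xs" "[x]"] Cons by simp
    also have "\<dots> = pedges xs \<union> {{y, x}}" using Cons.IH Cons by (simp add: last_rev)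
    also have "\<dots> = pedges (x # xs)" using Cons by (auto simp: insert_commute)
    finally show ?thesis .
  qed
qed

lemma cedges_rev: "cedges (rev xs) = cedges xs"
  unfolding cedges_def pedges_rev by (cases xs) (auto simp: last_rev hd_rev insert_commute)

lemma pedges_split: "e \<in> pedges xs \<Longrightarrow> \<exists>us a b ws. xs = us @ a # b # ws \<and> e = {a, b}"
proof (induction xs rule: pedges.induct)
  case (1 x y zs)
  show ?case
  proof (cases "e = {x, y}")
    case True then show ?thesis by (intro exI[of _ "[]"]) auto
  next
    case False
    then have "e \<in> pedges (y # zs)" using 1 by simp
    then obtain us a b ws where "y # zs = us @ a # b # ws" "e = {a,b}" using 1 by blast
    then show ?thesis by (intro exI[of _ "x # us"]) auto
  qed
qed auto

lemma cyc_rot: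
  assumes "cyc R (us @ ws)" "us \<noteq> []" "ws \<noteq> []"
  shows "cyc R (ws @ us)"
  using assms unfolding cyc_def by (auto simp: successively_append_iff)

lemma cedges_rot:
  assumes "us \<noteq> []" "ws \<noteq> []"
  shows "cedges (ws @ us) = cedges (us @ ws)"
  using assms unfolding cedges_def by (auto simp: pedges_append)

lemma cyc_rev:
  assumes "\<And>a b. R a b \<Longrightarrow> R b a" "cyc R cs"
  shows "cyc R (rev cs)"
proof -
  have "successively R cs" "R (last cs) (hd cs)" "length cs \<ge> 3" "distinct cs"
    using assms(2) unfolding cyc_def by auto
  moreover have "successively (\<lambda>x y. R y x) cs" using \<open>successively R cs\<close>
    by (rule successively_mono) (use assms(1) in blast)
  ultimately show ?thesis unfolding cyc_def
    using assms(1) by (auto simp: last_rev hd_rev)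
qed

lemma normalize:
  assumes c: "cyc R cs" and e: "{p, q} \<in> cedges cs"
  shows "\<exists>x m y. {x, y} = {p, q} \<and> cyc R (x # m @ [y]) \<and> set (x # m @ [y]) = set cs
              \<and> cedges (x # m @ [y]) = cedges cs"
proof -
  have l: "length cs \<ge> 3" using c unfolding cyc_def by simp
  then have ne: "cs \<noteq> []" by auto
  show ?thesis
  proof (cases "{p, q} = {last cs, hd cs}")
    case True
    have tne: "tl cs \<noteq> []" using l by (cases cs) auto
    have eq: "hd cs # butlast (tl cs) @ [last cs] = cs"
      using ne tne append_butlast_last_id[OF tne] last_tl[of cs] tne by (metis list.collapse)
    show ?thesis using c True
      by (intro exI[of _ "hd cs"] exI[of _ "butlast (tl cs)"] exI[of _ "last cs"]) (simp only: eq, simp add: insert_commute)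
  next
    case False
    then have "{p, q} \<in> pedges cs" using e ne unfolding cedges_def by auto
    then obtain us a b ws where cs: "cs = us @ a # b # ws" and ab: "{p,q} = {a,b}"
      using pedges_split by blast
    have "cyc R ((us @ [a]) @ (b # ws))" using c cs by simp
    then have "cyc R ((b # ws) @ (us @ [a]))" by (rule cyc_rot) auto
    moreover have "cedges ((b # ws) @ (us @ [a])) = cedges ((us @ [a]) @ (b # ws))"
      by (rule cedges_rot) auto
    ultimately have c': "cyc R (b # (ws @ us) @ [a])"
      and ce': "cedges (b # (ws @ us) @ [a]) = cedges cs" using cs by simp_all
    have s': "set (b # (ws @ us) @ [a]) = set cs" using cs by auto
    have ab': "{b, a} = {p, q}" using ab by (simp add: insert_commute)
    show ?thesis using c' ce' s' ab' by blast
  qed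
qed

lemma glue:
  assumes symR: "\<And>a b. R a b \<Longrightarrow> R b a" and c1: "cyc R cs1" and c2: "cyc R cs2"
    and it: "set cs1 \<inter> set cs2 = {p, q}" and pq: "p \<noteq> q"
    and e1: "{p, q} \<in> cedges cs1" and e2: "{p, q} \<in> cedges cs2"
  shows "\<exists>cs. cyc R cs \<and> set cs = set cs1 \<union> set cs2 \<and> cedges cs1 \<union> cedges cs2 - {{p, q}} \<subseteq> cedges cs"
proof -
  obtain x m1 y where n1: "{x, y} = {p, q}" "cyc R (x # m1 @ [y])" "set (x # m1 @ [y]) = set cs1"
    "cedges (x # m1 @ [y]) = cedges cs1" using normalize[OF c1 e1] by blast
  obtain x' m y' where n2: "{x', y'} = {p, q}" "cyc R (x' # m @ [y'])" "set (x' # m @ [y']) = set cs2"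
    "cedges (x' # m @ [y']) = cedges cs2" using normalize[OF c2 e2] by blast
  have "\<exists>m2. cyc R (y # m2 @ [x]) \<and> set (y # m2 @ [x]) = set cs2 \<and> cedges (y # m2 @ [x]) = cedges cs2"
  proof (cases "x' = y")
    case True
    then have "y' = x" using n1(1) n2(1) pq by (metis doubleton_eq_iff)
    then show ?thesis using n2 True by blast
  next
    case False
    then have "x' = x" "y' = y" using n1(1) n2(1) pq by (metis doubleton_eq_iff)+
    have "rev (x' # m @ [y']) = y # rev m @ [x]" using \<open>x' = x\<close> \<open>y' = y\<close> by simp
    then show ?thesis using cyc_rev[OF symR n2(2)] cedges_rev[of "x' # m @ [y']"] n2
      by (intro exI[of _ "rev m"]) (metis set_rev)
  qed
  then obtain m2 where n3: "cyc R (y # m2 @ [x])" "set (y # m2 @ [x]) = set cs2"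
    "cedges (y # m2 @ [x]) = cedges cs2" by blast
  have m2ne: "m2 \<noteq> []" using n3(1) unfolding cyc_def by auto
  define cs where "cs = x # m1 @ y # m2"
  have d1: "distinct (x # m1 @ [y])" and d2: "distinct (y # m2 @ [x])"
    using n1(2) n3(1) unfolding cyc_def by auto
  have xy: "{x, y} = set cs1 \<inter> set cs2" using n1(1) it by simp
  have dj: "set m2 \<inter> set (x # m1 @ [y]) = {}"
  proof -
    have "set m2 \<subseteq> set cs2" using n3(2) by auto
    moreover have "x \<notin> set m2" "y \<notin> set m2" using d2 by auto
    ultimately have "set m2 \<inter> set cs1 \<subseteq> {x, y}" using xy by blast
    then show ?thesis unfolding n1(3) using \<open>x \<notin> set m2\<close> \<open>y \<notin> set m2\<close> by blast
  qed
  have s1: "successively R (x # m1 @ [y])" and s2: "successively R (y # m2 @ [x])"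
    using n1(2) n3(1) unfolding cyc_def by auto
  have s2': "successively R (y # m2)" and lx: "R (last m2) x"
    using s2 successively_append_iff[of R "y # m2" "[x]"] m2ne by auto
  have "cyc R cs"
  proof -
    have "distinct cs" using d1 d2 dj unfolding cs_def by auto
    moreover have "successively R cs"
      using s1 s2' successively_append_iff[of R "x # m1 @ [y]" m2] m2ne unfolding cs_def
      by (simp add: successively_Cons)
    moreover have "length cs \<ge> 3" using m2ne unfolding cs_def by (cases m2) auto
    ultimately show ?thesis using lx m2ne unfolding cyc_def cs_def by auto
  qed
  moreover have "set cs = set cs1 \<union> set cs2" using n1(3) n3(2) unfolding cs_def by auto
  moreover have "cedges cs1 \<union> cedges cs2 - {{p, q}} \<subseteq> cedges cs"
  proof -
    have "cedges cs = insert {last m2, x} (pedges (x # m1 @ [y]) \<union> pedges m2 \<union> {{y, hd m2}})"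
      unfolding cedges_def cs_def using m2ne pedges_append[of "x # m1 @ [y]" m2] by simp
    moreover have "cedges cs1 = insert {y, x} (pedges (x # m1 @ [y]))"
      using n1(4) unfolding cedges_def by simp
    moreover have "cedges cs2 = insert {x, y} ({{y, hd m2}} \<union> pedges m2 \<union> {{last m2, x}})"
      using n3(3) m2ne pedges_append[of "y # m2" "[x]"] unfolding cedges_def
      by (simp add: pedges_Cons)
    ultimately show ?thesis using n1(1) by (auto simp: insert_commute)
  qed
  ultimately show ?thesis by blast
qed


lemma cycle_order:
  assumes sg: "sgraph V E" and bc: "block_is_cycle E B"
  shows "\<exists>xs. cyc E xs \<and> set xs = B"
proof -
  have finB: "finite B" and c3: "card B \<ge> 3" and cB: "connected_on E B"
    and deg: "\<And>w. w \<in> B \<Longrightarrow> card {u\<in>B. E w u} = 2"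
    using bc unfolding block_is_cycle_def by auto
  have sy: "\<And>a b. E a b \<Longrightarrow> E b a" and irr: "\<And>a. \<not> E a a"
    using sg unfolding sgraph_def by blast+
  define P where "P xs \<longleftrightarrow> distinct xs \<and> set xs \<subseteq> B \<and> successively E xs \<and> xs \<noteq> []" for xs
  obtain b0 where "b0 \<in> B" using c3 by fastforce
  then have "P [b0]" unfolding P_def by simp
  moreover have "\<forall>ys. P ys \<longrightarrow> length ys < Suc (card B)"
    using finB unfolding P_def by (metis card_mono distinct_card less_Suc_eq_le)
  ultimately obtain xs where Pxs: "P xs" and mx: "\<And>ys. P ys \<Longrightarrow> length ys \<le> length xs"
    using ex_has_greatest_nat[of P "[b0]" length "Suc (card B)"] by blast
  have ext: "u \<in> set zs" if "P zs" "length zs = length xs" "u \<in> B" "E (last zs) u" for zs u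
  proof (rule ccontr)
    assume "u \<notin> set zs"
    then have "P (zs @ [u])" using that unfolding P_def by (auto simp: successively_append_iff)
    then show False using mx[of "zs @ [u]"] that by simp
  qed
  have dx: "distinct xs" and sxB: "set xs \<subseteq> B" and sx: "successively E xs" and xne: "xs \<noteq> []"
    using Pxs unfolding P_def by auto
  define z where "z = last xs"
  have zB: "z \<in> B" using sxB xne unfolding z_def by auto
  let ?N = "\<lambda>w. {u\<in>B. E w u}"
  have Nz: "?N z \<subseteq> set xs" using ext[OF Pxs refl] unfolding z_def by blast
  have fN: "finite (?N w)" for w using finB by simp
  have "card (?N z) = 2" using deg zB .
  then obtain u1 u2 where u12: "?N z = {u1, u2}" "u1 \<noteq> u2" by (meson card_2_iff)
  have zN: "z \<notin> ?N z" using irr by simp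
  have "{u1, u2} \<subseteq> set xs" using Nz u12(1) by blast
  moreover have "z \<in> set xs" using xne unfolding z_def by simp
  ultimately have "{u1, u2, z} \<subseteq> set xs" by blast
  moreover have "card {u1, u2, z} = 3"
  proof -
    have "u1 \<in> ?N z" "u2 \<in> ?N z" using u12(1) by blast+
    then have "u1 \<noteq> z" "u2 \<noteq> z" using zN by blast+
    then show ?thesis using u12(2) by simp
  qed
  ultimately have "length xs \<ge> 3" using dx by (metis card_mono distinct_card List.finite_set)
  then have b1: "butlast xs \<noteq> []" by (cases xs rule: rev_cases) auto
  have e1: "xs = butlast xs @ [z]" using xne unfolding z_def by simp
  have e2: "butlast xs = butlast (butlast xs) @ [last (butlast xs)]" using b1 by simp
  obtain ys y where xs: "xs = ys @ [y, z]"
    using e1 e2 by (metis append.assoc append_Cons append_Nil)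
  have Eyz: "E y z" using sx unfolding xs by (simp add: successively_append_iff)
  have yB: "y \<in> B" using sxB xs by auto
  have "y \<in> ?N z" using Eyz sy yB by auto
  then obtain u where u: "?N z = {y, u}" "u \<noteq> y" using u12 by auto
  have uN: "u \<in> ?N z" using u by auto
  have "u \<in> set xs" using Nz uN by auto
  have uz: "u \<noteq> z" using uN irr by auto
  have close: "E z (hd xs)"
  proof (rule ccontr)
    assume nc: "\<not> E z (hd xs)"
    then have "u \<noteq> hd xs" using uN by auto
    have "u \<in> set ys" using \<open>u \<in> set xs\<close> u(2) uz xs by auto
    then obtain p q where ys: "ys = p @ u # q" by (meson split_list)
    have pne: "p \<noteq> []" using \<open>u \<noteq> hd xs\<close> xs ys by auto
    define a where "a = last p"
    define b where "b = hd (q @ [y, z])"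
    have xs2: "xs = p @ u # (q @ [y, z])" using xs ys by simp
    have "E a u" using sx pne unfolding xs2 a_def by (simp add: successively_append_iff)
    moreover have "E u b" using sx unfolding xs2 b_def
      by (cases q) (simp_all add: successively_append_iff)
    moreover have "a \<in> set p" using pne unfolding a_def by simp
    moreover have "b \<in> set (q @ [y])" unfolding b_def by (cases q) auto
    ultimately have abN: "a \<in> ?N u" "b \<in> ?N u" "z \<in> ?N u"
      using sy sxB xs2 uN by auto
    have "a \<noteq> b" "a \<noteq> z" "b \<noteq> z"
      using dx \<open>a \<in> set p\<close> \<open>b \<in> set (q @ [y])\<close> unfolding xs2 by auto
    then have "card {a, b, z} = 3" by simp
    moreover have "{a, b, z} \<subseteq> ?N u" using abN by auto
    ultimately have "card (?N u) \<ge> 3" by (metis card_mono fN)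
    moreover have "u \<in> B" using uN by simp
    ultimately show False using deg by fastforce
  qed
  have cx: "cyc E xs" unfolding cyc_def using \<open>length xs \<ge> 3\<close> dx sx close unfolding z_def by auto
  have "set xs = B"
  proof (rule ccontr)
    assume "set xs \<noteq> B"
    then obtain s t where st: "s \<in> set xs" "t \<in> B - set xs" "E s t"
      using crossing[OF cB sxB] xne sxB by (metis Diff_eq_empty_iff set_empty subset_antisym)
    then obtain p q where xp: "xs = p @ s # q" by (meson split_list)
    define xs' where "xs' = (if q = [] then xs else q @ (p @ [s]))"
    have "cyc E xs'"
    proof (cases "q = []")
      case True then show ?thesis using cx unfolding xs'_def by simp
    next
      case False
      have "cyc E ((p @ [s]) @ q)" using cx xp by simp
      then show ?thesis using False unfolding xs'_def by (simp add: cyc_rot)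
    qed
    moreover have "last xs' = s" using xp unfolding xs'_def by auto
    moreover have "set xs' = set xs" using xp unfolding xs'_def by auto
    moreover have "length xs' = length xs" using xp unfolding xs'_def by auto
    ultimately have "P xs'" "length xs' = length xs" "last xs' = s" "set xs' = set xs"
      using sxB unfolding P_def cyc_def by auto
    then have "t \<in> set xs'" using ext[of xs' t] st by auto
    then show False using st \<open>set xs' = set xs\<close> by auto
  qed
  then show ?thesis using cx by blast
qed


fun prism :: "'a list \<Rightarrow> ('a \<times> nat) list" where
  "prism (a # b # rest) = [(a,0),(a,1),(b,1),(b,0)] @ prism rest"
| "prism [a] = [(a,0),(a,1)]"
| "prism [] = []"

lemma box_iff: "box_E E K2_E V K2_V (a, i) (b, j) \<longleftrightarrow>
   a \<in> V \<and> b \<in> V \<and> i \<in> {0,1} \<and> j \<in> {0,1} \<and> ((E a b \<and> i = j) \<or> (a = b \<and> i \<noteq> j))"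
  unfolding box_E_def K2_E_def K2_V_def by auto

lemma prism_set: "set (prism c) = set c \<times> {0,1}"
  by (induction c rule: prism.induct) auto

lemma prism_hd: "c \<noteq> [] \<Longrightarrow> hd (prism c) = (hd c, 0)"
  by (induction c rule: prism.induct) auto

lemma prism_ne: "c \<noteq> [] \<Longrightarrow> prism c \<noteq> []"
  by (induction c rule: prism.induct) auto

lemma prism_last: "even (length c) \<Longrightarrow> c \<noteq> [] \<Longrightarrow> last (prism c) = (last c, 0)"
  by (induction c rule: prism.induct) (auto simp: prism_ne)

lemma prism_len: "length (prism c) = 2 * length c"
  by (induction c rule: prism.induct) auto

lemma prism_distinct: "distinct c \<Longrightarrow> distinct (prism c)"
  by (induction c rule: prism.induct) (auto simp: prism_set)

lemma prism_succ:
  assumes "successively E c" "set c \<subseteq> V" "even (length c)"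
  shows "successively (box_E E K2_E V K2_V) (prism c)"
  using assms
proof (induction c rule: prism.induct)
  case (1 a b rest)
  have ab: "E a b" "a \<in> V" "b \<in> V" using 1 by auto
  have IH: "successively (box_E E K2_E V K2_V) (prism rest)"
    using 1 by (auto simp: successively_Cons)
  show ?case
  proof (cases rest)
    case Nil then show ?thesis using ab by (simp add: box_iff)
  next
    case (Cons c rest')
    have "E b c" "c \<in> V" using 1(2,3) Cons by auto
    then have j: "box_E E K2_E V K2_V (b,0) (hd (prism rest))"
      using ab Cons prism_hd[of rest] by (simp add: box_iff)
    have f: "successively (box_E E K2_E V K2_V) [(a,0),(a,1),(b,1),(b,0)]"
      using ab by (simp add: box_iff)
    show ?thesis unfolding prism.simps(1) successively_append_iff
      using f j IH by simp
  qed
qed auto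

lemma prism_rungs: "w \<in> set c \<Longrightarrow> {(w,0),(w,1)} \<in> pedges (prism c)"
proof (induction c rule: prism.induct)
  case (1 a b rest)
  have sub: "pedges [(a,0),(a,1),(b,1),(b,0)] \<union> pedges (prism rest) \<subseteq> pedges (prism (a#b#rest))"
    unfolding prism.simps(1) pedges_append by blast
  have "{(a,0::nat),(a,1)} \<in> pedges [(a,0),(a,1),(b,1),(b,0)]" by simp
  moreover have "{(b,0::nat),(b,1)} \<in> pedges [(a,0),(a,1),(b,1),(b,0)]"
  proof -
    have e: "{(b,0::nat),(b,1)} = {(b,1),(b,0)}" by (rule insert_commute)
    have "{(b,1::nat),(b,0)} \<in> pedges [(a,0),(a,1),(b,1),(b,0)]" by simp
    then show ?thesis unfolding e .
  qed
  moreover have "w = a \<or> w = b \<or> w \<in> set rest" using 1(2) by simp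
  ultimately have "{(w,0::nat),(w,1)} \<in> pedges [(a,0),(a,1),(b,1),(b,0)] \<union> pedges (prism rest)"
    using 1(1) by blast
  then show ?case using sub by (rule subsetD[rotated])
qed auto

lemma pedges_sub_cedges: "pedges xs \<subseteq> cedges xs"
  unfolding cedges_def by (cases xs) auto

lemma prism_cycle:
  assumes "cyc E c" "even (length c)" "set c \<subseteq> V"
  shows "\<exists>cs. cyc (box_E E K2_E V K2_V) cs \<and> set cs = set c \<times> {0,1} \<and>
              (\<forall>w\<in>set c. {(w,0),(w,1)} \<in> cedges cs)"
proof -
  have c: "length c \<ge> 3" "distinct c" "successively E c" "E (last c) (hd c)"
    using assms(1) unfolding cyc_def by auto
  have ne: "c \<noteq> []" using c by auto
  have "cyc (box_E E K2_E V K2_V) (prism c)" unfolding cyc_def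
  proof (intro conjI)
    show "3 \<le> length (prism c)" using c prism_len[of c] by simp
    show "distinct (prism c)" using c prism_distinct by blast
    show "successively (box_E E K2_E V K2_V) (prism c)" using prism_succ c assms by blast
    have "last c \<in> V" "hd c \<in> V" using ne assms(3) by auto
    then show "box_E E K2_E V K2_V (last (prism c)) (hd (prism c))"
      using prism_last[OF assms(2) ne] prism_hd[OF ne] c by (simp add: box_iff)
  qed
  moreover have "\<forall>w\<in>set c. {(w,0),(w,1)} \<in> cedges (prism c)"
  proof
    fix w assume "w \<in> set c"
    show "{(w,0),(w,1)} \<in> cedges (prism c)" using subsetD[OF pedges_sub_cedges prism_rungs[OF \<open>w \<in> set c\<close>]] .
  qed
  moreover have "set (prism c) = set c \<times> {0,1}" by (rule prism_set)
  ultimately show ?thesis by blast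
qed

lemma K2_cycle:
  assumes "E x y" "E y x" "x \<noteq> y" "x \<in> V" "y \<in> V"
  shows "\<exists>cs. cyc (box_E E K2_E V K2_V) cs \<and> set cs = {x, y} \<times> {0,1} \<and>
              (\<forall>w\<in>{x,y}. {(w,0),(w,1)} \<in> cedges cs)"
proof -
  let ?cs = "[(x,0),(x,1),(y,1),(y,0)]"
  have "cyc (box_E E K2_E V K2_V) ?cs" using assms unfolding cyc_def by (simp add: box_iff)
  moreover have "set ?cs = {x, y} \<times> {0,1}" by auto
  moreover have "\<forall>w\<in>{x,y}. {(w,0),(w,1)} \<in> cedges ?cs" unfolding cedges_def by (auto simp: insert_commute)
  ultimately show ?thesis by blast
qed


lemma cyc_mono: "cyc R cs \<Longrightarrow> (\<And>a b. R a b \<Longrightarrow> R' a b) \<Longrightarrow> cyc R' cs"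
  unfolding cyc_def using successively_mono by blast

lemma blk_nbr:
  assumes sc: "semi_cactus V E" and b: "is_block V E B" and vB: "v \<in> B"
  shows "\<exists>u\<in>B. u \<noteq> v \<and> E v u"
proof -
  have sg: "sgraph V E" using sc unfolding semi_cactus_def by blast
  have "block_is_cycle E B \<or> block_is_K2 E B" using sc b unfolding semi_cactus_def by blast
  then show ?thesis
  proof
    assume "block_is_cycle E B"
    then have "card {u\<in>B. E v u} = 2" using vB unfolding block_is_cycle_def by blast
    then obtain u where "u \<in> B" "E v u" by (metis (no_types, lifting) card.empty empty_Collect_eq zero_neq_numeral)
    moreover have "u \<noteq> v" using sg \<open>E v u\<close> unfolding sgraph_def by blast
    ultimately show ?thesis by blast
  next
    assume "block_is_K2 E B"
    then obtain x y where "B = {x, y}" "x \<noteq> y" "E x y" unfolding block_is_K2_def by blast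
    moreover have "E y x" using sg \<open>E x y\<close> unfolding sgraph_def by blast
    ultimately show ?thesis using vB by auto
  qed
qed

lemma box_sym: "sgraph V E \<Longrightarrow> box_E E K2_E V K2_V a b \<Longrightarrow> box_E E K2_E V K2_V b a"
  unfolding box_E_def K2_E_def sgraph_def by auto

lemma box_mono: "V1 \<subseteq> V \<Longrightarrow> box_E (restr E V1) K2_E V1 K2_V a b \<Longrightarrow> box_E E K2_E V K2_V a b"
  unfolding box_E_def restr_def by auto

lemma main:
  "finite V \<Longrightarrow> semi_cactus V E \<Longrightarrow> even_graph V E \<Longrightarrow>
   \<exists>cs. cyc (box_E E K2_E V K2_V) cs \<and> set cs = V \<times> {0,1} \<and>
     (\<forall>w\<in>V. card {B. is_block V E B \<and> w \<in> B} = 1 \<longrightarrow> {(w,0),(w,1)} \<in> cedges cs)"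
proof (induction "card V" arbitrary: V E rule: less_induct)
  case less
  have fin: "finite V" and sc: "semi_cactus V E" and ev: "even_graph V E" using less.prems by auto
  have sg: "sgraph V E" using sc unfolding semi_cactus_def by blast
  have sy: "\<And>a b. E a b \<Longrightarrow> E b a" using sg unfolding sgraph_def by blast
  have cnt: "\<And>w. w \<in> V \<Longrightarrow> card {B. is_block V E B \<and> w \<in> B} \<in> {1,2}"
    using sc unfolding semi_cactus_def by blast
  have finS: "\<And>P. finite {B. is_block V E B \<and> P B}"
    by (rule finite_subset[of _ "Pow V"]) (use fin in \<open>auto simp: is_block_def\<close>)
  show ?case
  proof (cases "\<exists>v\<in>V. card {B. is_block V E B \<and> v \<in> B} = 2")
    case True
    then obtain v where vV: "v \<in> V" and c2v: "card {B. is_block V E B \<and> v \<in> B} = 2" by blast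
    then obtain B1 B2 where S: "{B. is_block V E B \<and> v \<in> B} = {B1, B2}" and B12: "B1 \<noteq> B2"
      by (meson card_2_iff)
    have b1: "is_block V E B1" "v \<in> B1" and b2: "is_block V E B2" "v \<in> B2" using S by blast+
    have B1V: "B1 \<subseteq> V" and B2V: "B2 \<subseteq> V" using b1 b2 unfolding is_block_def by auto
    define Rv where "Rv = (\<lambda>a c. E a c \<and> a \<in> V - {v} \<and> c \<in> V - {v})"
    define R where "R = {x. \<exists>b\<in>B1 - {v}. Rv\<^sup>*\<^sup>* b x}"
    define V1 where "V1 = insert v R"
    define V2 where "V2 = V - R"
    have RV: "R \<subseteq> V - {v}"
    proof
      fix x assume "x \<in> R"
      then obtain b where hb: "b \<in> B1 - {v}" "Rv\<^sup>*\<^sup>* b x" unfolding R_def by blast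
      from hb(2) show "x \<in> V - {v}"
        by (induction rule: rtranclp_induct) (use hb(1) B1V in \<open>auto simp: Rv_def\<close>)
    qed
    have B1R: "B1 - {v} \<subseteq> R" unfolding R_def by blast
    have clo: "y \<in> R" if h: "x \<in> R" "E x y" "y \<noteq> v" for x y
    proof -
      obtain b where hb: "b \<in> B1 - {v}" "Rv\<^sup>*\<^sup>* b x" using h(1) unfolding R_def by blast
      moreover have "Rv x y" using h RV sg unfolding Rv_def sgraph_def by blast
      ultimately have "Rv\<^sup>*\<^sup>* b y" by (meson rtranclp.rtrancl_into_rtrancl)
      then show ?thesis using hb(1) unfolding R_def by blast
    qed
    obtain u where u: "u \<in> B2" "u \<noteq> v" "E v u" using blk_nbr[OF sc b2] by blast
    obtain b where bb: "b \<in> B1" "b \<noteq> v" "E v b" using blk_nbr[OF sc b1] by blast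
    have uB1: "u \<notin> B1" using block_unique[OF b1(1) b2(1) b1(2) b2(2) _ u(1) u(2)[symmetric]] B12 by blast
    have uR: "u \<notin> R"
    proof
      assume "u \<in> R"
      then obtain b' where "b' \<in> B1 - {v}" "Rv\<^sup>*\<^sup>* b' u" unfolding R_def by blast
      then show False using cut_lemma[OF sg b1(1) b1(2) uB1 u(3)] unfolding Rv_def by blast
    qed
    have B2R: "B2 \<inter> R = {}"
    proof (rule ccontr)
      assume "B2 \<inter> R \<noteq> {}"
      then obtain w where w: "w \<in> B2" "w \<in> R" by blast
      have cB2: "connected_on E (B2 - {v})" using b2 unfolding is_block_def nonsep_on_def by blast
      have "w \<in> B2 - {v}" using w RV by blast
      have "B2 - {v} \<subseteq> R"
        by (rule propagate[OF cB2 \<open>w \<in> B2 - {v}\<close> w(2)]) (use clo in blast)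
      then show False using u uR by blast
    qed
    have un: "V = V1 \<union> V2" and it: "V1 \<inter> V2 = {v}" using RV vV unfolding V1_def V2_def by auto
    have un': "V = V2 \<union> V1" and it': "V2 \<inter> V1 = {v}" using un it by auto
    have noe: "\<not> E a c \<and> \<not> E c a" if "a \<in> V1 - {v}" "c \<in> V2 - {v}" for a c
      using that clo sy unfolding V1_def V2_def by blast
    have noe': "\<not> E a c \<and> \<not> E c a" if "a \<in> V2 - {v}" "c \<in> V1 - {v}" for a c
      using noe that by blast
    have bR: "b \<in> R" using B1R bb by blast
    have ne1: "V1 - {v} \<noteq> {}" using bR bb unfolding V1_def by blast
    have uV: "u \<in> V" using u B2V by blast
    have ne2: "V2 - {v} \<noteq> {}" using uV uR u unfolding V2_def by blast
    have V1V: "V1 \<subseteq> V" and V2V: "V2 \<subseteq> V" using un by auto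
    have lt1: "card V1 < card V"
      by (rule psubset_card_mono[OF fin]) (use V1V uV uR u in \<open>auto simp: V1_def\<close>)
    have lt2: "card V2 < card V"
      by (rule psubset_card_mono[OF fin]) (use V2V bR RV in \<open>auto simp: V2_def\<close>)
    have fin1: "finite V1" and fin2: "finite V2" using fin V1V V2V finite_subset by auto
    have sc1: "semi_cactus V1 (restr E V1)" by (rule semi_side[OF fin sc un it noe ne1])
    have sc2: "semi_cactus V2 (restr E V2)" by (rule semi_side[OF fin sc un' it' noe' ne2])
    have ev1: "even_graph V1 (restr E V1)" by (rule even_side[OF fin sc un it noe ne1 ev])
    have ev2: "even_graph V2 (restr E V2)" by (rule even_side[OF fin sc un' it' noe' ne2 ev])
    obtain cs1 where cs1: "cyc (box_E (restr E V1) K2_E V1 K2_V) cs1" "set cs1 = V1 \<times> {0,1}"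
      "\<And>w. w \<in> V1 \<Longrightarrow> card {B. is_block V1 (restr E V1) B \<and> w \<in> B} = 1 \<Longrightarrow> {(w,0),(w,1)} \<in> cedges cs1"
      using less.hyps[OF lt1 fin1 sc1 ev1] by blast
    obtain cs2 where cs2: "cyc (box_E (restr E V2) K2_E V2 K2_V) cs2" "set cs2 = V2 \<times> {0,1}"
      "\<And>w. w \<in> V2 \<Longrightarrow> card {B. is_block V2 (restr E V2) B \<and> w \<in> B} = 1 \<Longrightarrow> {(w,0),(w,1)} \<in> cedges cs2"
      using less.hyps[OF lt2 fin2 sc2 ev2] by blast
    have B1V1: "B1 \<subseteq> V1" using B1R unfolding V1_def by blast
    have B2V2: "B2 \<subseteq> V2" using B2R B2V unfolding V2_def by blast
    have "{B. is_block V1 (restr E V1) B \<and> v \<in> B} = {B1}"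
    proof -
      have "{B. is_block V1 (restr E V1) B \<and> v \<in> B} = {B. is_block V E B \<and> B \<subseteq> V1 \<and> v \<in> B}"
        using blocks_side[OF fin sc un it noe ne1] by blast
      also have "\<dots> = {B1}"
      proof -
        have uV1: "u \<notin> V1" using uR u(2) unfolding V1_def by blast
        have "B = B1" if "is_block V E B" "B \<subseteq> V1" "v \<in> B" for B
        proof -
          have "B \<in> {B1, B2}" using S that by blast
          moreover have "B \<noteq> B2" using that(2) u(1) uV1 by blast
          ultimately show ?thesis by blast
        qed
        then show ?thesis using b1 B1V1 by blast
      qed
      finally show ?thesis .
    qed
    then have r1: "{(v,0),(v,1)} \<in> cedges cs1" using cs1(3)[of v] un it by auto
    have "{B. is_block V2 (restr E V2) B \<and> v \<in> B} = {B2}"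
    proof -
      have "{B. is_block V2 (restr E V2) B \<and> v \<in> B} = {B. is_block V E B \<and> B \<subseteq> V2 \<and> v \<in> B}"
        using blocks_side[OF fin sc un' it' noe' ne2] by blast
      also have "\<dots> = {B2}"
      proof -
        have bV2: "b \<notin> V2" using bR unfolding V2_def by blast
        have "B = B2" if "is_block V E B" "B \<subseteq> V2" "v \<in> B" for B
        proof -
          have "B \<in> {B1, B2}" using S that by blast
          moreover have "B \<noteq> B1" using that(2) bb(1) bV2 by blast
          ultimately show ?thesis by blast
        qed
        then show ?thesis using b2 B2V2 by blast
      qed
      finally show ?thesis .
    qed
    then have r2: "{(v,0),(v,1)} \<in> cedges cs2" using cs2(3)[of v] un it by auto
    let ?R = "box_E E K2_E V K2_V"
    have c1: "cyc ?R cs1" using cs1(1) box_mono[OF V1V] by (rule cyc_mono)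
    have c2: "cyc ?R cs2" using cs2(1) box_mono[OF V2V] by (rule cyc_mono)
    have ints: "set cs1 \<inter> set cs2 = {(v,0),(v,1)}" using cs1(2) cs2(2) it by auto
    obtain cs where cs: "cyc ?R cs" "set cs = set cs1 \<union> set cs2"
      "cedges cs1 \<union> cedges cs2 - {{(v,0),(v,1)}} \<subseteq> cedges cs"
      using glue[OF box_sym[OF sg] c1 c2 ints _ r1 r2] by auto
    have "set cs = V \<times> {0,1}" using cs(2) cs1(2) cs2(2) un by auto
    moreover have "{(w,0),(w,1)} \<in> cedges cs" if w: "w \<in> V" "card {B. is_block V E B \<and> w \<in> B} = 1" for w
    proof -
      have wv: "w \<noteq> v" using w c2v by auto
      have ne: "{(w,0::nat),(w,1)} \<notin> {{(v,0),(v,1)}}" using wv by (auto simp: doubleton_eq_iff)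
      show ?thesis
      proof (cases "w \<in> V1")
        case True
        then have "w \<in> V1 - {v}" using wv by blast
        then have "{(w,0),(w,1)} \<in> cedges cs1"
          using cs1(3)[of w] w blocks_of_vertex_side[OF fin sc un it noe ne1 \<open>w \<in> V1 - {v}\<close>] by auto
        then show ?thesis using subsetD[OF cs(3) DiffI[OF UnI1 ne]] by blast
      next
        case False
        then have "w \<in> V2 - {v}" using wv w un by blast
        then have "{(w,0),(w,1)} \<in> cedges cs2"
          using cs2(3)[of w] w blocks_of_vertex_side[OF fin sc un' it' noe' ne2 \<open>w \<in> V2 - {v}\<close>] by auto
        then show ?thesis using subsetD[OF cs(3) DiffI[OF UnI2 ne]] by blast
      qed
    qed
    ultimately show ?thesis using cs(1) by blast
  next
    case False
    then have c1: "\<And>w. w \<in> V \<Longrightarrow> card {B. is_block V E B \<and> w \<in> B} = 1" using cnt by blast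
    have cV: "connected_on E V" and Vne: "V \<noteq> {}"
      using sc unfolding semi_cactus_def connected_graph_def by auto
    obtain x where xV: "x \<in> V" using Vne by blast
    have "{B. is_block V E B \<and> x \<in> B} \<noteq> {}"
    proof
      assume h: "{B. is_block V E B \<and> x \<in> B} = {}"
      have "card {B. is_block V E B \<and> x \<in> B} = 0" by (simp only: h card.empty)
      then show False using c1[OF xV] by simp
    qed
    then obtain B where B: "is_block V E B" "x \<in> B" by blast
    have BV: "B \<subseteq> V" using B unfolding is_block_def by blast
    have VB: "V = B"
    proof (rule ccontr)
      assume "V \<noteq> B"
      then obtain a c where ac: "a \<in> B" "c \<in> V - B" "E a c"
        using crossing[OF cV BV] B BV by blast
      have "nonsep_on E {a, c}" using ac sy by (intro nonsep_edge) auto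
      moreover have "{a, c} \<subseteq> V" using ac BV by auto
      ultimately obtain B' where B': "is_block V E B'" "{a, c} \<subseteq> B'" using block_exists[OF fin] by blast
      have "B \<noteq> B'" using B' ac by blast
      moreover have "{B, B'} \<subseteq> {B. is_block V E B \<and> a \<in> B}" using B B' ac by auto
      ultimately have "card {B. is_block V E B \<and> a \<in> B} \<ge> 2"
        by (metis card_2_iff card_mono finS)
      then show False using c1[of a] ac BV by auto
    qed
    have "block_is_cycle E B \<or> block_is_K2 E B" using sc B unfolding semi_cactus_def by blast
    then obtain cs where cs: "cyc (box_E E K2_E V K2_V) cs" "set cs = V \<times> {0,1}"
      "\<forall>w\<in>V. {(w,0),(w,1)} \<in> cedges cs"
    proof
      assume "block_is_cycle E B"
      then obtain c where c: "cyc E c" "set c = B" using cycle_order[OF sg] by blast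
      then have "is_cycle V E c" using VB is_cycle_iff by blast
      then have "even (length c)" using ev unfolding even_graph_def by blast
      then show ?thesis using prism_cycle[OF c(1) _ ] c(2) VB that by auto
    next
      assume "block_is_K2 E B"
      then obtain y z where "B = {y, z}" "y \<noteq> z" "E y z" unfolding block_is_K2_def by blast
      then show ?thesis using K2_cycle[of E y z V] sy VB that by auto
    qed
    then show ?thesis by blast
  qed
qed

theorem lemma21:
  fixes V :: "'a set" and E :: "'a \<Rightarrow> 'a \<Rightarrow> bool"
  assumes "finite V"
    and "semi_cactus V E"
    and "even_graph V E"
  shows "hamiltonian (box_V V K2_V) (box_E E K2_E V K2_V)"
proof -
  obtain cs where cs: "cyc (box_E E K2_E V K2_V) cs" "set cs = V \<times> {0,1}"
    using main[OF assms] by blast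
  have eq: "box_V V K2_V = V \<times> {0,1}" unfolding box_V_def K2_V_def by simp
  have "is_cycle (box_V V K2_V) (box_E E K2_E V K2_V) cs" unfolding is_cycle_iff eq using cs by simp
  moreover have "set cs = box_V V K2_V" using cs eq by simp
  ultimately show ?thesis unfolding hamiltonian_def by blast
qed


end
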